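(* Let $\alpha\in(0,1/2)$. For every non-degenerate real random variable $X$ with $E|X|<\infty$, $$-1+2\alpha < \tilde{s}_2(\alpha) < 1-2\alpha .$$ Moreover, both bounds are sharp: $\sup_X \tilde{s}_2(\alpha)=1-2\alpha$ and $\inf_X \tilde{s}_2(\alpha)=-1+2\alpha$, where the supremum and infimum range over all non-degenerate random variables $X$ with finite mean.
   Context: For a random variable $X$ with $E|X|<\infty$ and $\tau\in(0,1)$, the $\tau$-expectile $e_X(\tau)$ is the unique real number $t$ satisfying $\tau\, E(X-t)_+ = (1-\tau)\, E(X-t)_-$, where $x_+=\max\{x,0\}$ and $x_-=\max\{-x,0\}$. In particular $e_X(1/2)=\mu:=EX$. For $\alpha\in(0,1/2)$, the expectile skewness is $$\tilde{s}_2(\alpha) = \frac{e_X(1-\alpha)+e_X(\alpha)-2\mu}{e_X(1-\alpha)-e_X(\alpha)}.$$ (For non-degenerate $X$, $e_X(\alpha)<\mu<e_X(1-\alpha)$, so this is well defined.) *)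

theory Defs
  imports "HOL-Probability.Probability"
begin

definition nondeg_rv :: "'a measure \<Rightarrow> ('a \<Rightarrow> real) \<Rightarrow> bool" where
  "nondeg_rv M X \<longleftrightarrow> prob_space M \<and> X \<in> borel_measurable M \<and> integrable M X
     \<and> \<not> (\<exists>c. AE x in M. X x = c)"

definition expectile :: "'a measure \<Rightarrow> ('a \<Rightarrow> real) \<Rightarrow> real \<Rightarrow> real" where
  "expectile M X \<tau> = (THE t. \<tau> * (\<integral>x. max (X x - t) 0 \<partial>M)
                              = (1 - \<tau>) * (\<integral>x. max (t - X x) 0 \<partial>M))"

definition expectile_skewness :: "'a measure \<Rightarrow> ('a \<Rightarrow> real) \<Rightarrow> real \<Rightarrow> real" where
  "expectile_skewness M X \<alpha> =
     (expectile M X (1 - \<alpha>) + expectile M X \<alpha> - 2 * (\<integral>x. X x \<partial>M))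
     / (expectile M X (1 - \<alpha>) - expectile M X \<alpha>)"

end

theory Submission
  imports Defs
begin

definition eF :: "'a measure \<Rightarrow> ('a \<Rightarrow> real) \<Rightarrow> real \<Rightarrow> real" where
  "eF M X t = (\<integral>x. max (X x - t) 0 \<partial>M)"
definition eG :: "'a measure \<Rightarrow> ('a \<Rightarrow> real) \<Rightarrow> real \<Rightarrow> real" where
  "eG M X t = (\<integral>x. max (t - X x) 0 \<partial>M)"

locale exc = prob_space M for M :: "'a measure" +
  fixes X :: "'a \<Rightarrow> real"
  assumes I: "integrable M X"
begin

lemma intF: "integrable M (\<lambda>x. max (X x - t) 0)"
  using I by (intro integrable_max) auto

lemma intG: "integrable M (\<lambda>x. max (t - X x) 0)"
  using I by (intro integrable_max) auto

lemma FG: "eF M X t - eG M X t = (\<integral>x. X x \<partial>M) - t"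
proof -
  have "eF M X t - eG M X t = (\<integral>x. max (X x - t) 0 - max (t - X x) 0 \<partial>M)"
    unfolding eF_def eG_def using intF intG by simp
  also have "\<dots> = (\<integral>x. X x - t \<partial>M)"
    by (rule Bochner_Integration.integral_cong) auto
  also have "\<dots> = (\<integral>x. X x \<partial>M) - t"
    using I by (simp add: prob_space)
  finally show ?thesis .
qed

lemma F_mono: "s \<le> t \<Longrightarrow> eF M X t \<le> eF M X s"
  unfolding eF_def by (rule integral_mono[OF intF intF]) auto

lemma G_mono: "s \<le> t \<Longrightarrow> eG M X s \<le> eG M X t"
  unfolding eG_def by (rule integral_mono[OF intG intG]) auto

lemma F_strict: assumes "s < t" "eF M X t = eF M X s" shows "AE x in M. X x \<le> s"
proof -
  have "(\<integral>x. max (X x - s) 0 - max (X x - t) 0 \<partial>M) = 0"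
    using assms intF intF unfolding eF_def by simp
  hence "AE x in M. max (X x - s) 0 - max (X x - t) 0 = 0"
    using integral_nonneg_eq_0_iff_AE[of M "\<lambda>x. max (X x - s) 0 - max (X x - t) 0"] intF assms(1)
    by auto
  thus ?thesis by (rule eventually_mono) (use assms(1) in \<open>auto simp: max_def split: if_splits\<close>)
qed

lemma G_strict: assumes "s < t" "eG M X t = eG M X s" shows "AE x in M. t \<le> X x"
proof -
  have "(\<integral>x. max (t - X x) 0 - max (s - X x) 0 \<partial>M) = 0"
    using assms intG intG unfolding eG_def by simp
  hence "AE x in M. max (t - X x) 0 - max (s - X x) 0 = 0"
    using integral_nonneg_eq_0_iff_AE[of M "\<lambda>x. max (t - X x) 0 - max (s - X x) 0"] intG assms(1)
    by auto
  thus ?thesis by (rule eventually_mono) (use assms(1) in \<open>auto simp: max_def split: if_splits\<close>)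
qed

definition gf :: "real \<Rightarrow> real \<Rightarrow> real" where
  "gf \<tau> t = \<tau> * eF M X t - (1 - \<tau>) * eG M X t"

lemma g_strict:
  assumes "0 < \<tau>" "\<tau> < 1" "s \<le> t"
  shows "gf \<tau> t + min \<tau> (1 - \<tau>) * (t - s) \<le> gf \<tau> s"
proof -
  define dF where "dF = eF M X s - eF M X t"
  define dG where "dG = eG M X t - eG M X s"
  have a: "dF \<ge> 0" "dG \<ge> 0" using F_mono G_mono assms unfolding dF_def dG_def by auto
  have b: "dF + dG = t - s" using FG[of s] FG[of t] unfolding dF_def dG_def by linarith
  have "min \<tau> (1 - \<tau>) * dF \<le> \<tau> * dF" by (rule mult_right_mono) (use a in auto)
  moreover have "min \<tau> (1 - \<tau>) * dG \<le> (1 - \<tau>) * dG" by (rule mult_right_mono) (use a in auto)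
  moreover have "gf \<tau> s - gf \<tau> t = \<tau> * dF + (1 - \<tau>) * dG"
    unfolding gf_def dF_def dG_def by (simp add: algebra_simps)
  moreover have "min \<tau> (1 - \<tau>) * (t - s) = min \<tau> (1 - \<tau>) * dF + min \<tau> (1 - \<tau>) * dG"
    using b by (metis distrib_left)
  ultimately show ?thesis by linarith
qed

lemma g_lip:
  assumes "0 < \<tau>" "\<tau> < 1"
  shows "dist (gf \<tau> s) (gf \<tau> t) \<le> 1 * dist s t"
proof -
  have *: "\<bar>gf \<tau> s - gf \<tau> t\<bar> \<le> t - s" if "s \<le> t" for s t
  proof -
    define dF where "dF = eF M X s - eF M X t"
    define dG where "dG = eG M X t - eG M X s"
    have a: "dF \<ge> 0" "dG \<ge> 0" using F_mono G_mono that unfolding dF_def dG_def by auto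
    have b: "dF + dG = t - s" using FG[of s] FG[of t] unfolding dF_def dG_def by linarith
    have "\<tau> * dF \<le> dF" using a assms by (simp add: mult_left_le_one_le)
    moreover have "(1 - \<tau>) * dG \<le> dG" using a assms by (simp add: mult_left_le_one_le)
    moreover have "\<tau> * dF \<ge> 0" "(1 - \<tau>) * dG \<ge> 0" using a assms by auto
    ultimately show ?thesis using b unfolding gf_def dF_def dG_def by (simp add: algebra_simps abs_if)
  qed
  show ?thesis
  proof (cases "s \<le> t")
    case True thus ?thesis using *[OF True] by (simp add: dist_real_def)
  next
    case False thus ?thesis using *[of t s] by (simp add: dist_real_def abs_minus_commute)
  qed
qed

lemma g_cont: assumes "0 < \<tau>" "\<tau> < 1" shows "continuous_on S (gf \<tau>)"
  by (rule lipschitz_on_continuous_on[of 1]) (rule lipschitz_onI, use g_lip[OF assms] in auto)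

lemma g_root: assumes "0 < \<tau>" "\<tau> < 1" shows "\<exists>e. gf \<tau> e = 0"
proof -
  define c where "c = min \<tau> (1 - \<tau>)"
  have c: "c > 0" using assms unfolding c_def by auto
  define K where "K = \<bar>gf \<tau> 0\<bar> / c"
  have K: "K \<ge> 0" using c unfolding K_def by auto
  have cK: "c * K = \<bar>gf \<tau> 0\<bar>" using c unfolding K_def by auto
  have 1: "gf \<tau> K \<le> 0" using g_strict[OF assms, of 0 K] K cK unfolding c_def by auto
  have 2: "gf \<tau> (-K) \<ge> 0" using g_strict[OF assms, of "-K" 0] K cK unfolding c_def by auto
  show ?thesis using IVT2'[of "gf \<tau>" K 0 "-K", OF 1 2] K g_cont[OF assms] by auto
qed

lemma g_inj: assumes "0 < \<tau>" "\<tau> < 1" "gf \<tau> s = gf \<tau> t" shows "s = t"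
proof (rule ccontr)
  assume "s \<noteq> t"
  have c: "min \<tau> (1 - \<tau>) > 0" using assms by auto
  show False
  proof (cases "s < t")
    case True thus ?thesis using g_strict[OF assms(1,2), of s t] c assms(3)
      by (smt (verit) mult_pos_pos)
  next
    case False thus ?thesis using g_strict[OF assms(1,2), of t s] c assms(3) \<open>s \<noteq> t\<close>
      by (smt (verit) mult_pos_pos)
  qed
qed

lemma expectile_root: assumes "0 < \<tau>" "\<tau> < 1"
  shows "gf \<tau> (expectile M X \<tau>) = 0"
proof -
  obtain e where e: "gf \<tau> e = 0" using g_root[OF assms] by blast
  have "expectile M X \<tau> = e"
    unfolding expectile_def
  proof (rule the_equality)
    show "\<tau> * (\<integral>x. max (X x - e) 0 \<partial>M) = (1 - \<tau>) * (\<integral>x. max (e - X x) 0 \<partial>M)"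
      using e unfolding gf_def eF_def eG_def by simp
  next
    fix t assume "\<tau> * (\<integral>x. max (X x - t) 0 \<partial>M) = (1 - \<tau>) * (\<integral>x. max (t - X x) 0 \<partial>M)"
    hence "gf \<tau> t = gf \<tau> e" using e unfolding gf_def eF_def eG_def by simp
    thus "t = e" using g_inj[OF assms] by blast
  qed
  thus ?thesis using e by simp
qed

lemma expectile_unique: assumes "0 < \<tau>" "\<tau> < 1" "gf \<tau> t = 0"
  shows "expectile M X \<tau> = t"
  using g_inj[OF assms(1,2)] expectile_root[OF assms(1,2)] assms(3) by metis

lemma AE_le_mean: assumes "AE x in M. X x \<le> expectation X" shows "AE x in M. X x = expectation X"
proof -
  have i: "integrable M (\<lambda>x. expectation X - X x)" using I by auto
  have "(\<integral>x. expectation X - X x \<partial>M) = 0" using I by (simp add: prob_space)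
  hence "AE x in M. expectation X - X x = 0"
    using integral_nonneg_eq_0_iff_AE[OF i] assms by (auto elim!: eventually_mono)
  thus ?thesis by (rule eventually_mono) auto
qed

lemma AE_ge_mean: assumes "AE x in M. X x \<ge> expectation X" shows "AE x in M. X x = expectation X"
proof -
  have i: "integrable M (\<lambda>x. X x - expectation X)" using I by auto
  have "(\<integral>x. X x - expectation X \<partial>M) = 0" using I by (simp add: prob_space)
  hence "AE x in M. X x - expectation X = 0"
    using integral_nonneg_eq_0_iff_AE[OF i] assms by (auto elim!: eventually_mono)
  thus ?thesis by (rule eventually_mono) auto
qed

lemma bounds:
  assumes nd: "\<not> (\<exists>c. AE x in M. X x = c)" and \<alpha>: "0 < \<alpha>" "\<alpha> < 1/2"
  shows "-1 + 2*\<alpha> < expectile_skewness M X \<alpha> \<and> expectile_skewness M X \<alpha> < 1 - 2*\<alpha>"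
proof -
  define \<mu> where "\<mu> = expectation X"
  define a where "a = expectile M X \<alpha>"
  define b where "b = expectile M X (1 - \<alpha>)"
  have \<alpha>1: "0 < 1 - \<alpha>" "1 - \<alpha> < 1" using \<alpha> by auto
  have ga: "gf \<alpha> a = 0" unfolding a_def using expectile_root \<alpha> by auto
  have gb: "gf (1 - \<alpha>) b = 0" unfolding b_def using expectile_root \<alpha>1 by auto
  have notle: "\<not> (AE x in M. X x \<le> \<mu>)" using AE_le_mean nd unfolding \<mu>_def by blast
  have notge: "\<not> (AE x in M. X x \<ge> \<mu>)" using AE_ge_mean nd unfolding \<mu>_def by blast
  have FGm: "eF M X \<mu> = eG M X \<mu>" using FG[of \<mu>] unfolding \<mu>_def by simp
  have Gm0: "eG M X \<mu> \<ge> 0" unfolding eG_def by (rule integral_nonneg_AE) (simp add: max_def)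
  have Gm: "eG M X \<mu> > 0"
  proof (rule ccontr)
    assume "\<not> eG M X \<mu> > 0"
    hence "eG M X \<mu> = 0" using Gm0 by auto
    hence "AE x in M. max (\<mu> - X x) 0 = 0"
      using integral_nonneg_eq_0_iff_AE[OF intG[of \<mu>]] unfolding eG_def by auto
    hence "AE x in M. X x \<ge> \<mu>" by (rule eventually_mono) (auto simp: max_def split: if_splits)
    thus False using notge by blast
  qed
  have cpos: "min \<alpha> (1 - \<alpha>) > 0" using \<alpha> by auto
  have "gf \<alpha> \<mu> = (2*\<alpha> - 1) * eG M X \<mu>" unfolding gf_def FGm by (simp add: algebra_simps)
  moreover have "(2*\<alpha> - 1) * eG M X \<mu> < 0" using Gm \<alpha> by (intro mult_neg_pos) auto
  ultimately have gam: "gf \<alpha> \<mu> < 0" by simp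
  have "gf (1 - \<alpha>) \<mu> = (1 - 2*\<alpha>) * eG M X \<mu>" unfolding gf_def FGm by (simp add: algebra_simps)
  moreover have "(1 - 2*\<alpha>) * eG M X \<mu> > 0" using Gm \<alpha> by (intro mult_pos_pos) auto
  ultimately have gbm: "gf (1 - \<alpha>) \<mu> > 0" by simp
  have am: "a < \<mu>"
  proof (rule ccontr)
    assume "\<not> a < \<mu>"
    hence "gf \<alpha> a + min \<alpha> (1 - \<alpha>) * (a - \<mu>) \<le> gf \<alpha> \<mu>" using g_strict[OF \<alpha>(1)] \<alpha> by auto
    moreover have "min \<alpha> (1 - \<alpha>) * (a - \<mu>) \<ge> 0" using cpos \<open>\<not> a < \<mu>\<close> by auto
    ultimately show False using ga gam by linarith
  qed
  have bm: "\<mu> < b"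
  proof (rule ccontr)
    assume "\<not> \<mu> < b"
    hence "gf (1 - \<alpha>) \<mu> + min (1 - \<alpha>) (1 - (1 - \<alpha>)) * (\<mu> - b) \<le> gf (1 - \<alpha>) b"
      using g_strict[OF \<alpha>1] by auto
    moreover have "min (1 - \<alpha>) (1 - (1 - \<alpha>)) * (\<mu> - b) \<ge> 0" using cpos \<open>\<not> \<mu> < b\<close> by auto
    ultimately show False using gb gbm by linarith
  qed
  have Fb: "eF M X b < eF M X \<mu>"
  proof -
    have "eF M X b \<le> eF M X \<mu>" using F_mono bm by auto
    moreover have "eF M X b \<noteq> eF M X \<mu>" using F_strict[OF bm] notle by auto
    ultimately show ?thesis by auto
  qed
  have Ga: "eG M X a < eG M X \<mu>"
  proof -
    have "eG M X a \<le> eG M X \<mu>" using G_mono am by auto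
    moreover have "eG M X \<mu> \<noteq> eG M X a" using G_strict[OF am] notge by auto
    ultimately show ?thesis by auto
  qed
  have Fa: "eF M X \<mu> \<le> eF M X a" using F_mono am by auto
  have Gb: "eG M X \<mu> \<le> eG M X b" using G_mono bm by auto
  define Fa' where "Fa' = eF M X a"
  define Ga' where "Ga' = eG M X a"
  define Fb' where "Fb' = eF M X b"
  define Gb' where "Gb' = eG M X b"
  have e1: "\<alpha> * Fa' = (1 - \<alpha>) * Ga'" using ga unfolding gf_def Fa'_def Ga'_def by simp
  have e2: "(1 - \<alpha>) * Fb' = \<alpha> * Gb'" using gb unfolding gf_def Fb'_def Gb'_def by simp
  have e3: "Fa' - Ga' = \<mu> - a" using FG[of a] unfolding Fa'_def Ga'_def \<mu>_def by simp
  have e4: "Fb' - Gb' = \<mu> - b" using FG[of b] unfolding Fb'_def Gb'_def \<mu>_def by simp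
  have u: "a + b - 2*\<mu> - (1 - 2*\<alpha>) * (b - a) = 2 * ((1 - 2*\<alpha>) * (Fb' - Fa'))"
  proof -
    have "(1 - \<alpha>) * (\<mu> - a) = (1 - 2*\<alpha>) * Fa'"
      using e1 by (simp add: e3[symmetric] algebra_simps)
    moreover have "\<alpha> * (b - \<mu>) = (1 - 2*\<alpha>) * Fb'"
    proof -
      have "b - \<mu> = Gb' - Fb'" using e4 by linarith
      hence "\<alpha> * (b - \<mu>) = \<alpha> * Gb' - \<alpha> * Fb'" by (simp add: right_diff_distrib[symmetric])
      thus ?thesis using e2 by (simp add: algebra_simps)
    qed
    ultimately show ?thesis by (simp add: algebra_simps)
  qed
  have l: "a + b - 2*\<mu> + (1 - 2*\<alpha>) * (b - a) = 2 * ((1 - 2*\<alpha>) * (Gb' - Ga'))"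
  proof -
    have "\<alpha> * (\<mu> - a) = (1 - 2*\<alpha>) * Ga'"
      using e1 by (simp add: e3[symmetric] algebra_simps)
    moreover have "(1 - \<alpha>) * (b - \<mu>) = (1 - 2*\<alpha>) * Gb'"
    proof -
      have "b - \<mu> = Gb' - Fb'" using e4 by linarith
      hence "(1 - \<alpha>) * (b - \<mu>) = (1 - \<alpha>) * Gb' - (1 - \<alpha>) * Fb'" by (simp add: right_diff_distrib[symmetric])
      thus ?thesis using e2 by (simp add: algebra_simps)
    qed
    ultimately show ?thesis by (simp add: algebra_simps)
  qed
  have p1: "(1 - 2*\<alpha>) * (Fa' - Fb') > 0" using Fb Fa \<alpha> unfolding Fa'_def Fb'_def by simp
  have p2: "(1 - 2*\<alpha>) * (Gb' - Ga') > 0" using Ga Gb \<alpha> unfolding Ga'_def Gb'_def by simp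
  have ba: "b - a > 0" using am bm by simp
  have U: "a + b - 2*\<mu> < (1 - 2*\<alpha>) * (b - a)" using u p1 by (simp add: algebra_simps)
  have L: "-(1 - 2*\<alpha>) * (b - a) < a + b - 2*\<mu>" using l p2 by (simp add: algebra_simps)
  have sk: "expectile_skewness M X \<alpha> = (a + b - 2*\<mu>) / (b - a)"
    unfolding expectile_skewness_def a_def b_def \<mu>_def by simp
  show ?thesis unfolding sk using U L ba
    by (simp add: pos_divide_less_eq pos_less_divide_eq)
qed

end

definition BM :: "real \<Rightarrow> real measure" where
  "BM p = measure_pmf (map_pmf (\<lambda>b. if b then 1 else 0 :: real) (bernoulli_pmf p))"

lemma BM_int:
  assumes "0 \<le> p" "p \<le> 1"
  shows "(\<integral>x. f x \<partial>BM p) = f 1 * p + f 0 * (1 - p)"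
  unfolding BM_def using assms by simp

lemma BM_exc: assumes "0 < p" "p < 1" shows "exc (BM p) (\<lambda>x. x)"
proof -
  have "finite (set_pmf (map_pmf (\<lambda>b. if b then 1 else 0 :: real) (bernoulli_pmf p)))"
    by simp
  thus ?thesis unfolding exc_def exc_axioms_def BM_def
    by (auto simp: prob_space_measure_pmf intro: integrable_measure_pmf_finite)
qed

lemma BM_nondeg: assumes "0 < p" "p < 1" shows "nondeg_rv (BM p) (\<lambda>x. x)"
proof -
  interpret exc "BM p" "\<lambda>x. x" by (rule BM_exc[OF assms])
  have s: "set_pmf (map_pmf (\<lambda>b. if b then 1 else 0 :: real) (bernoulli_pmf p)) = {0, 1}"
    using assms by (auto simp: UNIV_bool)
  have "\<not> (AE x in BM p. x = c)" for c
    unfolding BM_def AE_measure_pmf_iff s by auto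
  thus ?thesis unfolding nondeg_rv_def using prob_space_axioms I by auto
qed

lemma BM_expectile:
  assumes "0 < p" "p < 1" "0 < \<tau>" "\<tau> < 1"
  shows "expectile (BM p) (\<lambda>x. x) \<tau> = \<tau> * p / (\<tau> * p + (1 - \<tau>) * (1 - p))"
proof -
  interpret exc "BM p" "\<lambda>x. x" by (rule BM_exc[OF assms(1,2)])
  define t where "t = \<tau> * p / (\<tau> * p + (1 - \<tau>) * (1 - p))"
  have D: "\<tau> * p + (1 - \<tau>) * (1 - p) > 0" using assms by (simp add: add_pos_pos)
  have t0: "0 \<le> t" unfolding t_def using assms D by simp
  have t1: "t \<le> 1" unfolding t_def using assms D by (simp add: divide_le_eq)
  have F: "eF (BM p) (\<lambda>x. x) t = (1 - t) * p"
    unfolding eF_def BM_int[OF less_imp_le[OF assms(1)] less_imp_le[OF assms(2)]] using t0 t1 by simp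
  have G: "eG (BM p) (\<lambda>x. x) t = t * (1 - p)"
    unfolding eG_def BM_int[OF less_imp_le[OF assms(1)] less_imp_le[OF assms(2)]] using t0 t1 by simp
  have "gf \<tau> t = \<tau> * ((1 - t) * p) - (1 - \<tau>) * (t * (1 - p))" unfolding gf_def F G by simp
  also have "\<dots> = 0" unfolding t_def using D by (simp add: field_simps)
  finally have "gf \<tau> t = 0" .
  thus ?thesis using expectile_unique assms unfolding t_def by blast
qed

lemma BM_skew:
  assumes "0 < p" "p < 1" "0 < \<alpha>" "\<alpha> < 1/2"
  shows "expectile_skewness (BM p) (\<lambda>x. x) \<alpha> = (1 - 2*\<alpha>) * (1 - 2*p)"
proof -
  have D1: "\<alpha> * p + (1 - \<alpha>) * (1 - p) > 0" using assms by (simp add: add_pos_pos)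
  have D2: "(1 - \<alpha>) * p + \<alpha> * (1 - p) > 0" using assms by (simp add: add_pos_pos)
  have m: "(\<integral>x. x \<partial>BM p) = p" using BM_int[of p "\<lambda>x. x"] assms by simp
  have ea: "expectile (BM p) (\<lambda>x. x) \<alpha> = \<alpha> * p / (\<alpha> * p + (1 - \<alpha>) * (1 - p))"
    using BM_expectile assms by simp
  have eb: "expectile (BM p) (\<lambda>x. x) (1 - \<alpha>) = (1 - \<alpha>) * p / ((1 - \<alpha>) * p + \<alpha> * (1 - p))"
    using BM_expectile[of p "1 - \<alpha>"] assms by simp
  define D1 where "D1 = \<alpha> * p + (1 - \<alpha>) * (1 - p)"
  define D2 where "D2 = (1 - \<alpha>) * p + \<alpha> * (1 - p)"
  have d1: "D1 > 0" "D2 > 0" using D1 D2 unfolding D1_def D2_def by auto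
  have K: "p * (1 - p) * (1 - 2*\<alpha>) > 0" using assms by simp
  define K where "K = p * (1 - p) * (1 - 2*\<alpha>)"
  have num0: "\<alpha> * p * D2 + (1 - \<alpha>) * p * D1 - 2 * p * (D1 * D2) = K * (D1 - D2)"
    unfolding K_def D1_def D2_def by (simp add: algebra_simps)
  have den0: "(1 - \<alpha>) * p * D1 - \<alpha> * p * D2 = K * (D1 + D2)"
    unfolding K_def D1_def D2_def by (simp add: algebra_simps)
  have num: "\<alpha> * p / D1 + (1 - \<alpha>) * p / D2 - 2 * p = K * (D1 - D2) / (D1 * D2)"
    unfolding num0[symmetric] using d1 by (simp add: field_simps)
  have den: "(1 - \<alpha>) * p / D2 - \<alpha> * p / D1 = K * (D1 + D2) / (D1 * D2)"
    unfolding den0[symmetric] using d1 by (simp add: field_simps)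
  have s1: "D1 + D2 = 1" unfolding D1_def D2_def by (simp add: algebra_simps)
  have s2: "D1 - D2 = (1 - 2*\<alpha>) * (1 - 2*p)" unfolding D1_def D2_def by (simp add: algebra_simps)
  have S1: "expectile_skewness (BM p) (\<lambda>x. x) \<alpha> = (K * (D1 - D2) / (D1 * D2)) / (K * (D1 + D2) / (D1 * D2))"
    unfolding expectile_skewness_def m ea eb D1_def[symmetric] D2_def[symmetric]
    using num den by (simp add: algebra_simps)
  have Kp: "K > 0" unfolding K_def using K .
  have S2: "(K * (D1 - D2) / (D1 * D2)) / (K * (D1 + D2) / (D1 * D2)) = D1 - D2"
    using s1 Kp d1 by (simp add: field_simps)
  show ?thesis using S1 S2 s2 by simp
qed


lemma part1:
  assumes "nondeg_rv M X" "0 < \<alpha>" "\<alpha> < 1/2"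
  shows "-1 + 2*\<alpha> < expectile_skewness M X \<alpha> \<and> expectile_skewness M X \<alpha> < 1 - 2*\<alpha>"
proof -
  have "exc M X" using assms(1) unfolding nondeg_rv_def exc_def exc_axioms_def by auto
  thus ?thesis using exc.bounds[of M X \<alpha>] assms unfolding nondeg_rv_def by auto
qed

theorem mainTheorem2:
  fixes \<alpha> :: real
  assumes "0 < \<alpha>" and "\<alpha> < 1/2"
  shows "(\<forall>(M :: 'a measure) X. nondeg_rv M X \<longrightarrow>
            -1 + 2*\<alpha> < expectile_skewness M X \<alpha> \<and> expectile_skewness M X \<alpha> < 1 - 2*\<alpha>)
       \<and> (SUP MX \<in> {(M :: real measure, X :: real \<Rightarrow> real). nondeg_rv M X}.
            expectile_skewness (fst MX) (snd MX) \<alpha>) = 1 - 2*\<alpha>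
       \<and> (INF MX \<in> {(M :: real measure, X :: real \<Rightarrow> real). nondeg_rv M X}.
            expectile_skewness (fst MX) (snd MX) \<alpha>) = -1 + 2*\<alpha>"
proof (intro conjI)
  show "\<forall>(M :: 'a measure) X. nondeg_rv M X \<longrightarrow>
            -1 + 2*\<alpha> < expectile_skewness M X \<alpha> \<and> expectile_skewness M X \<alpha> < 1 - 2*\<alpha>"
    using part1 assms by blast
  define S where "S = (\<lambda>MX. expectile_skewness (fst MX) (snd MX) \<alpha>) `
     {(M :: real measure, X :: real \<Rightarrow> real). nondeg_rv M X}"
  have mem: "(1 - 2*\<alpha>) * (1 - 2*p) \<in> S" if "0 < p" "p < 1" for p
  proof -
    have "(BM p, \<lambda>x. x) \<in> {(M :: real measure, X :: real \<Rightarrow> real). nondeg_rv M X}"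
      using BM_nondeg[OF that] by simp
    thus ?thesis unfolding S_def using BM_skew[OF that assms]
      by (metis (no_types, lifting) fst_conv image_eqI snd_conv)
  qed
  have ne: "S \<noteq> {}" using mem[of "1/2"] by auto
  have bnd: "-1 + 2*\<alpha> < x \<and> x < 1 - 2*\<alpha>" if xS: "x \<in> S" for x
  proof -
    obtain M :: "real measure" and X where MX: "nondeg_rv M X" "x = expectile_skewness M X \<alpha>"
      using xS unfolding S_def by auto
    show ?thesis unfolding MX(2) using part1[OF MX(1) assms] .
  qed
  have c: "1 - 2*\<alpha> > 0" using assms by simp
  show "(SUP MX \<in> {(M :: real measure, X :: real \<Rightarrow> real). nondeg_rv M X}.
            expectile_skewness (fst MX) (snd MX) \<alpha>) = 1 - 2*\<alpha>"
    unfolding S_def[symmetric]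
  proof (rule cSup_eq_non_empty[OF ne])
    fix x assume "x \<in> S" thus "x \<le> 1 - 2*\<alpha>" using bnd by fastforce
  next
    fix y assume ub: "\<And>x. x \<in> S \<Longrightarrow> x \<le> y"
    show "1 - 2*\<alpha> \<le> y"
    proof (rule ccontr)
      assume "\<not> 1 - 2*\<alpha> \<le> y"
      define d where "d = 1 - y / (1 - 2*\<alpha>)"
      have d: "d > 0" unfolding d_def using \<open>\<not> 1 - 2*\<alpha> \<le> y\<close> c by (simp add: divide_less_eq)
      define p where "p = min (d/4) (1/2)"
      have p: "0 < p" "p < 1" "2 * p < d" unfolding p_def using d by auto
      have "y < (1 - 2*\<alpha>) * (1 - 2*p)"
      proof -
        have "y / (1 - 2*\<alpha>) < 1 - 2*p" using p(3) unfolding d_def by simp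
        thus ?thesis using c by (simp add: divide_less_eq mult.commute)
      qed
      thus False using ub[OF mem[OF p(1,2)]] by simp
    qed
  qed
  show "(INF MX \<in> {(M :: real measure, X :: real \<Rightarrow> real). nondeg_rv M X}.
            expectile_skewness (fst MX) (snd MX) \<alpha>) = -1 + 2*\<alpha>"
    unfolding S_def[symmetric]
  proof (rule cInf_eq_non_empty[OF ne])
    fix x assume "x \<in> S" thus "-1 + 2*\<alpha> \<le> x" using bnd by fastforce
  next
    fix y assume lb: "\<And>x. x \<in> S \<Longrightarrow> y \<le> x"
    show "y \<le> -1 + 2*\<alpha>"
    proof (rule ccontr)
      assume "\<not> y \<le> -1 + 2*\<alpha>"
      define d where "d = 1 + y / (1 - 2*\<alpha>)"
      have "-1 < y / (1 - 2*\<alpha>)" using \<open>\<not> y \<le> -1 + 2*\<alpha>\<close> c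
        by (subst less_divide_eq) auto
      hence d: "d > 0" unfolding d_def by linarith
      define q where "q = min (d/4) (1/2)"
      have q: "0 < q" "q < 1" "2 * q < d" unfolding q_def using d by auto
      have "(1 - 2*\<alpha>) * (1 - 2*(1 - q)) < y"
      proof -
        have "2*q - 1 < y / (1 - 2*\<alpha>)" using q(3) unfolding d_def by simp
        hence "(1 - 2*\<alpha>) * (2*q - 1) < y" using c by (simp add: less_divide_eq mult.commute)
        thus ?thesis by (simp add: algebra_simps)
      qed
      thus False using lb[OF mem[of "1 - q"]] q by simp
    qed
  qed
qed

end
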